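(* For every pair of integers $r$ and $k$ with $r\ge 2$, $k$ positive, $r+k\equiv 0\pmod 2$ and $k\le r$, there exist infinitely many triples $(G,P,d)$ such that (1) $G$ is a graph with $\chi(G)\le r$, (2) $P\subset V(G)$ and $|\mathcal{D}_G(P,2)|=2(r+k-1)$, (3) $d\colon P\to[r+k]$ is a precoloring of $P$ in $G$, and (4) $d$ cannot be extended to a $\frac{3r+k}{2}$-coloring of $G$.
   Context: For a graph $G$, $P\subset V(G)$ and a positive integer $k$, $\mathcal{D}_G(P,k)=\{\{x,y\}\subset P: x\ne y,\ d_G(x,y)\le k\}$, where $d_G$ is the distance in $G$. $[m]=\{1,\dots,m\}$. A precoloring of $P$ in $G$ is a proper coloring of $G[P]$; an $m$-coloring of $G$ is a proper coloring using at most $m$ colors; $d$ is extended by a coloring $f$ of $G$ if $f(v)=d(v)$ for all $v\in P$. *)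

theory Defs
  imports Main
begin

definition graph :: "nat set \<Rightarrow> nat set set \<Rightarrow> bool" where
  "graph V E \<longleftrightarrow> finite V \<and> (\<forall>e\<in>E. e \<subseteq> V \<and> card e = 2)"

definition adj :: "nat set set \<Rightarrow> nat \<Rightarrow> nat \<Rightarrow> bool" where
  "adj E x y \<longleftrightarrow> x \<noteq> y \<and> {x, y} \<in> E"

fun walk :: "nat set set \<Rightarrow> nat list \<Rightarrow> bool" where
  "walk E [] = True"
| "walk E [x] = True"
| "walk E (x # y # xs) = (adj E x y \<and> walk E (y # xs))"

definition dist_le :: "nat set set \<Rightarrow> nat \<Rightarrow> nat \<Rightarrow> nat \<Rightarrow> bool" where
  "dist_le E x y k \<longleftrightarrow>
     (\<exists>ps. walk E ps \<and> ps \<noteq> [] \<and> hd ps = x \<and> last ps = y \<and> length ps \<le> k + 1)"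

definition close_pairs :: "nat set set \<Rightarrow> nat set \<Rightarrow> nat \<Rightarrow> nat set set" where
  "close_pairs E P k = {{x, y} | x y. x \<in> P \<and> y \<in> P \<and> x \<noteq> y \<and> dist_le E x y k}"

definition proper_coloring_on :: "nat set set \<Rightarrow> nat set \<Rightarrow> (nat \<Rightarrow> nat) \<Rightarrow> nat \<Rightarrow> bool" where
  "proper_coloring_on E S f m \<longleftrightarrow>
     (\<forall>v\<in>S. f v \<in> {1..m}) \<and> (\<forall>x\<in>S. \<forall>y\<in>S. adj E x y \<longrightarrow> f x \<noteq> f y)"

definition chromatic_number :: "nat set \<Rightarrow> nat set set \<Rightarrow> nat" where
  "chromatic_number V E = (LEAST m. \<exists>f. proper_coloring_on E V f m)"

end

theory Submission
  imports Defs "HOL-Library.Countable"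
begin

datatype vt = X nat nat | Pv nat | Qv nat | Hh | Hh2 | Pad nat

instance vt :: countable by countable_datatype

fun ed0 :: "nat \<Rightarrow> nat \<Rightarrow> vt \<Rightarrow> vt \<Rightarrow> bool" where
  "ed0 r m (X i j) (X i' j') = (i < r \<and> i' < r \<and> j < m \<and> j' < m \<and> i \<noteq> i')"
| "ed0 r m (X i j) (Pv j') = (i + 1 < r \<and> j < m \<and> j' = j)"
| "ed0 r m (X i j) (Qv j') = (i + 1 = r \<and> j < m \<and> j' = j)"
| "ed0 r m (X i j) Hh = (i + 1 < r \<and> j < m)"
| "ed0 r m (X i j) Hh2 = (i + 1 = r \<and> j < m)"
| "ed0 r m _ _ = False"

definition ed :: "nat \<Rightarrow> nat \<Rightarrow> vt \<Rightarrow> vt \<Rightarrow> bool" where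
  "ed r m a b \<longleftrightarrow> ed0 r m a b \<or> ed0 r m b a"

definition EE :: "nat \<Rightarrow> nat \<Rightarrow> nat set set" where
  "EE r m = {{to_nat a, to_nat b} | a b. ed r m a b}"

definition Vs :: "nat \<Rightarrow> nat \<Rightarrow> nat \<Rightarrow> vt set" where
  "Vs r m n = (\<lambda>(i,j). X i j) ` ({..<r} \<times> {..<m}) \<union> Pv ` {..<m} \<union> Qv ` {..<m} \<union> {Hh, Hh2} \<union> Pad ` {..<n}"

definition PS :: "nat \<Rightarrow> vt set" where
  "PS m = Pv ` {..<m} \<union> Qv ` {..<m} \<union> {Hh, Hh2}"

lemma ed_sym: "ed r m a b = ed r m b a"
  by (auto simp: ed_def)

lemma ed_irrefl: "ed r m a b \<Longrightarrow> a \<noteq> b"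
  by (cases a; cases b; auto simp: ed_def)

lemma ed_Vs: "ed r m a b \<Longrightarrow> a \<in> Vs r m n"
  by (cases a; cases b; auto simp: ed_def Vs_def)

lemma adj_iff: "adj (EE r m) x y \<longleftrightarrow> (\<exists>a b. x = to_nat a \<and> y = to_nat b \<and> ed r m a b)"
proof
  assume "adj (EE r m) x y"
  then obtain a b where xy: "x \<noteq> y" "{x,y} = {to_nat a, to_nat b}" "ed r m a b"
    unfolding adj_def EE_def by blast
  then show "\<exists>a b. x = to_nat a \<and> y = to_nat b \<and> ed r m a b"
    by (metis doubleton_eq_iff ed_sym)
next
  assume "\<exists>a b. x = to_nat a \<and> y = to_nat b \<and> ed r m a b"
  then obtain a b where "x = to_nat a" "y = to_nat b" "ed r m a b" by blast
  then show "adj (EE r m) x y" unfolding adj_def EE_def using ed_irrefl by fastforce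
qed

lemma adj_enc: "adj (EE r m) (to_nat a) (to_nat b) \<longleftrightarrow> ed r m a b"
  by (auto simp: adj_iff)

lemma dist2: "x \<noteq> y \<Longrightarrow> dist_le E x y 2 \<longleftrightarrow> adj E x y \<or> (\<exists>z. adj E x z \<and> adj E z y)"
proof
  assume ne: "x \<noteq> y" and "dist_le E x y 2"
  then obtain ps where ps: "walk E ps" "ps \<noteq> []" "hd ps = x" "last ps = y" "length ps \<le> 3"
    unfolding dist_le_def by auto
  show "adj E x y \<or> (\<exists>z. adj E x z \<and> adj E z y)"
  proof (cases ps)
    case Nil then show ?thesis using ps by simp
  next
    case (Cons a t) note c1 = this
    show ?thesis
    proof (cases t)
      case Nil then show ?thesis using ps ne c1 by simp
    next
      case (Cons b u) note c2 = this
      show ?thesis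
      proof (cases u)
        case Nil then show ?thesis using ps c1 c2 by simp
      next
        case (Cons c w)
        then have "w = []" using ps c1 c2 by simp
        then show ?thesis using ps c1 c2 Cons by auto
      qed
    qed
  qed
next
  assume "adj E x y \<or> (\<exists>z. adj E x z \<and> adj E z y)"
  then show "dist_le E x y 2"
  proof
    assume "adj E x y" then show ?thesis unfolding dist_le_def
      by (intro exI[of _ "[x,y]"]) simp
  next
    assume "\<exists>z. adj E x z \<and> adj E z y"
    then obtain z where "adj E x z" "adj E z y" by blast
    then show ?thesis unfolding dist_le_def
      by (intro exI[of _ "[x,z,y]"]) simp
  qed
qed

lemma ed_X: "ed r m a b \<Longrightarrow> (\<exists>i j. a = X i j) \<or> (\<exists>i j. b = X i j)"
  by (cases a; cases b; auto simp: ed_def)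

lemma noedge: "a \<in> PS m \<Longrightarrow> b \<in> PS m \<Longrightarrow> \<not> ed r m a b"
  using ed_X by (fastforce simp: PS_def)

lemma edX: "ed r m (X i j) b \<longleftrightarrow> ed0 r m (X i j) b"
  by (cases b; auto simp: ed_def)

lemma common: assumes "r \<ge> 2" "a \<in> PS m" "b \<in> PS m" "a \<noteq> b"
  shows "(\<exists>c. ed r m a c \<and> ed r m c b) \<longleftrightarrow>
    (\<exists>j<m. (a = Pv j \<and> b = Hh) \<or> (a = Hh \<and> b = Pv j) \<or> (a = Qv j \<and> b = Hh2) \<or> (a = Hh2 \<and> b = Qv j))"
proof
  assume "\<exists>c. ed r m a c \<and> ed r m c b"
  then obtain c where c: "ed r m a c" "ed r m c b" by blast
  have "\<not>(\<exists>i j. a = X i j)" using assms(2) by (auto simp: PS_def)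
  then have "\<exists>i j. c = X i j" using ed_X[OF c(1)] by blast
  then obtain i j where cij: "c = X i j" by blast
  have 1: "ed0 r m (X i j) a" "ed0 r m (X i j) b" using c cij edX ed_sym by simp_all
  show "\<exists>j<m. (a = Pv j \<and> b = Hh) \<or> (a = Hh \<and> b = Pv j) \<or> (a = Qv j \<and> b = Hh2) \<or> (a = Hh2 \<and> b = Qv j)"
  proof -
    have A: "(\<exists>j'. a = Pv j') \<or> (\<exists>j'. a = Qv j') \<or> a = Hh \<or> a = Hh2" using assms(2) by (auto simp: PS_def)
    have B: "(\<exists>j'. b = Pv j') \<or> (\<exists>j'. b = Qv j') \<or> b = Hh \<or> b = Hh2" using assms(3) by (auto simp: PS_def)
    show ?thesis using A B 1 assms(4) by (elim disjE exE; simp)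
  qed
next
  assume "\<exists>j<m. (a = Pv j \<and> b = Hh) \<or> (a = Hh \<and> b = Pv j) \<or> (a = Qv j \<and> b = Hh2) \<or> (a = Hh2 \<and> b = Qv j)"
  then obtain j where j: "j < m" "(a = Pv j \<and> b = Hh) \<or> (a = Hh \<and> b = Pv j) \<or> (a = Qv j \<and> b = Hh2) \<or> (a = Hh2 \<and> b = Qv j)" by blast
  show "\<exists>c. ed r m a c \<and> ed r m c b"
  proof (cases "(a = Pv j \<and> b = Hh) \<or> (a = Hh \<and> b = Pv j)")
    case True
    then show ?thesis using j assms(1) by (intro exI[of _ "X 0 j"]) (auto simp: ed_def)
  next
    case False
    then show ?thesis using j assms(1) by (intro exI[of _ "X (r-1) j"]) (auto simp: ed_def)
  qed
qed

lemma close_eq: assumes "r \<ge> 2"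
  shows "close_pairs (EE r m) (to_nat ` PS m) 2 =
     (\<lambda>j. {to_nat (Pv j), to_nat Hh}) ` {..<m} \<union> (\<lambda>j. {to_nat (Qv j), to_nat Hh2}) ` {..<m}"
    (is "?L = ?R")
proof
  show "?L \<subseteq> ?R"
  proof
    fix e assume "e \<in> ?L"
    then obtain a b where ab: "e = {to_nat a, to_nat b}" "a \<in> PS m" "b \<in> PS m" "a \<noteq> b"
       "dist_le (EE r m) (to_nat a) (to_nat b) 2"
      unfolding close_pairs_def by auto
    have dd: "adj (EE r m) (to_nat a) (to_nat b) \<or> (\<exists>z. adj (EE r m) (to_nat a) z \<and> adj (EE r m) z (to_nat b))"
      using ab(4,5) dist2[of "to_nat a" "to_nat b"] by simp
    have "\<not> adj (EE r m) (to_nat a) (to_nat b)" using noedge[OF ab(2,3)] by (simp add: adj_enc)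
    then obtain z where z: "adj (EE r m) (to_nat a) z" "adj (EE r m) z (to_nat b)" using dd by blast
    then obtain a' c where "to_nat a = to_nat a'" "z = to_nat c" "ed r m a' c" unfolding adj_iff by blast
    then have "ed r m a c" "ed r m c b" using z(2) by (simp_all add: adj_enc)
    then have "\<exists>c. ed r m a c \<and> ed r m c b" by blast
    then obtain j where j: "j < m" "(a = Pv j \<and> b = Hh) \<or> (a = Hh \<and> b = Pv j) \<or> (a = Qv j \<and> b = Hh2) \<or> (a = Hh2 \<and> b = Qv j)"
      using common[OF assms ab(2,3,4)] by blast
    have jm: "j \<in> {..<m}" using j(1) by simp
    have "e = {to_nat (Pv j), to_nat Hh} \<or> e = {to_nat (Qv j), to_nat Hh2}"
      using j(2) ab(1) by (elim disjE conjE) (simp_all add: insert_commute)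
    then show "e \<in> ?R" using jm by blast
  qed
next
  show "?R \<subseteq> ?L"
  proof
    fix e assume "e \<in> ?R"
    then obtain j a b where ab: "j < m" "e = {to_nat a, to_nat b}"
      "(a = Pv j \<and> b = Hh) \<or> (a = Qv j \<and> b = Hh2)" by blast
    then have abP: "a \<in> PS m" "b \<in> PS m" "a \<noteq> b" by (auto simp: PS_def)
    have "\<exists>c. ed r m a c \<and> ed r m c b" using common[OF assms abP] ab by blast
    then obtain c where "ed r m a c" "ed r m c b" by blast
    then have "adj (EE r m) (to_nat a) (to_nat c) \<and> adj (EE r m) (to_nat c) (to_nat b)"
      by (simp add: adj_enc)
    then have "dist_le (EE r m) (to_nat a) (to_nat b) 2"
      using dist2[of "to_nat a" "to_nat b"] abP by auto
    moreover have "to_nat a \<in> to_nat ` PS m" "to_nat b \<in> to_nat ` PS m" "to_nat a \<noteq> to_nat b"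
      using abP by auto
    ultimately show "e \<in> ?L" unfolding close_pairs_def using ab(2) by blast
  qed
qed

lemma card_close: assumes "r \<ge> 2"
  shows "card (close_pairs (EE r m) (to_nat ` PS m) 2) = 2 * m"
proof -
  have i1: "inj_on (\<lambda>j. {to_nat (Pv j), to_nat Hh}) {..<m}"
    by (auto simp: inj_on_def doubleton_eq_iff)
  have i2: "inj_on (\<lambda>j. {to_nat (Qv j), to_nat Hh2}) {..<m}"
    by (auto simp: inj_on_def doubleton_eq_iff)
  have d: "(\<lambda>j. {to_nat (Pv j), to_nat Hh}) ` {..<m} \<inter> (\<lambda>j. {to_nat (Qv j), to_nat Hh2}) ` {..<m} = {}"
    by (auto simp: doubleton_eq_iff)
  show ?thesis unfolding close_eq[OF assms]
    by (subst card_Un_disjoint) (auto simp: d card_image i1 i2)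
qed

lemma part_bound:
  fixes m M :: nat and G :: "nat \<Rightarrow> nat"
  assumes m1: "m \<ge> 1"
    and H: "\<And>j. j < m \<Longrightarrow> G j \<in> {1..M} \<and> G j \<noteq> j + 1 \<and> G j \<noteq> m + 1"
  shows "card (G ` {..<m} \<inter> {1..m}) + 2 * card (G ` {..<m} \<inter> {m+2..M}) \<ge> 2"
proof -
  let ?L = "G ` {..<m} \<inter> {1..m}" and ?R = "G ` {..<m} \<inter> {m+2..M}"
  have fR: "finite ?R" and fL: "finite ?L" by auto
  have c: "G 0 \<in> {1..M}" "G 0 \<noteq> 1" "G 0 \<noteq> m + 1" using H[of 0] m1 by auto
  show ?thesis
  proof (cases "G 0 \<ge> m + 2")
    case True
    then have "G 0 \<in> ?R" using c m1 by auto
    then have "card ?R \<ge> 1" using fR by (metis One_nat_def Suc_leI card_gt_0_iff empty_iff)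
    then show ?thesis by linarith
  next
    case False
    then have c2: "2 \<le> G 0" "G 0 \<le> m" using c by auto
    define j where "j = G 0 - 1"
    have j: "j < m" "j + 1 = G 0" using c2 unfolding j_def by auto
    have c': "G j \<in> {1..M}" "G j \<noteq> G 0" "G j \<noteq> m + 1" using H[OF j(1)] j by auto
    show ?thesis
    proof (cases "G j \<ge> m + 2")
      case True
      then have "G j \<in> ?R" using c' j by auto
      then have "card ?R \<ge> 1" using fR by (metis One_nat_def Suc_leI card_gt_0_iff empty_iff)
      then show ?thesis by linarith
    next
      case False
      then have "{G 0, G j} \<subseteq> ?L" using c' c2 j m1 by auto
      then have "card {G 0, G j} \<le> card ?L" using fL by (rule card_mono[rotated])
      moreover have "card {G 0, G j} = 2" using c'(2) by simp
      ultimately show ?thesis by linarith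
    qed
  qed
qed

lemma pigeon:
  fixes m M r :: nat and G :: "nat \<Rightarrow> nat \<Rightarrow> nat"
  assumes m1: "m \<ge> 1"
    and H: "\<And>i j. i < r \<Longrightarrow> j < m \<Longrightarrow> G i j \<in> {1..M} \<and> G i j \<noteq> j + 1 \<and> G i j \<noteq> m + 1"
    and D: "\<And>i i' j j'. i < r \<Longrightarrow> i' < r \<Longrightarrow> j < m \<Longrightarrow> j' < m \<Longrightarrow> i \<noteq> i' \<Longrightarrow> G i j \<noteq> G i' j'"
    and ar: "2 * M < 2 * r + m + 2" and mM: "m + 1 \<le> M"
  shows False
proof -
  define L where "L i = G i ` {..<m} \<inter> {1..m}" for i
  define R where "R i = G i ` {..<m} \<inter> {m+2..M}" for i
  have each: "card (L i) + 2 * card (R i) \<ge> 2" if "i < r" for i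
    unfolding L_def R_def by (rule part_bound[OF m1 H[OF that]])
  have "2 * r \<le> (\<Sum>i<r. card (L i) + 2 * card (R i))"
    using sum_mono[of "{..<r}" "\<lambda>_. 2::nat" "\<lambda>i. card (L i) + 2 * card (R i)"] each by simp
  also have "\<dots> = (\<Sum>i<r. card (L i)) + 2 * (\<Sum>i<r. card (R i))"
    by (simp add: sum.distrib sum_distrib_left)
  also have "(\<Sum>i<r. card (L i)) = card (\<Union>i<r. L i)"
    by (rule card_UN_disjoint[symmetric]) (auto simp: L_def dest: D)
  also have "(\<Sum>i<r. card (R i)) = card (\<Union>i<r. R i)"
    by (rule card_UN_disjoint[symmetric]) (auto simp: R_def dest: D)
  also have "card (\<Union>i<r. L i) \<le> card {1..m}"
    by (rule card_mono) (auto simp: L_def)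
  also have "card (\<Union>i<r. R i) \<le> card {m+2..M}"
    by (rule card_mono) (auto simp: R_def)
  finally have "2 * r \<le> m + 2 * (M + 1 - (m + 2))" by simp
  then show False using ar mM by arith
qed

lemma proper_iff: "proper_coloring_on (EE r m) (to_nat ` S) f c \<longleftrightarrow>
   (\<forall>a\<in>S. f (to_nat a) \<in> {1..c}) \<and> (\<forall>a\<in>S. \<forall>b\<in>S. ed r m a b \<longrightarrow> f (to_nat a) \<noteq> f (to_nat b))"
  unfolding proper_coloring_on_def by (auto simp: adj_enc)

fun colf :: "nat \<Rightarrow> vt \<Rightarrow> nat" where
  "colf r (X i j) = i + 1"
| "colf r (Pv j) = r"
| "colf r Hh = r"
| "colf r _ = 1"

fun dcol :: "nat \<Rightarrow> vt \<Rightarrow> nat" where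
  "dcol m (Pv j) = j + 1"
| "dcol m (Qv j) = j + 1"
| "dcol m Hh = m + 1"
| "dcol m Hh2 = m + 1"
| "dcol m _ = 1"

lemma finite_Vs: "finite (Vs r m n)" by (simp add: Vs_def)

lemma PS_Vs: "PS m \<subseteq> Vs r m n" by (auto simp: PS_def Vs_def)

lemma graph_ok: "graph (to_nat ` Vs r m n) (EE r m)"
proof -
  have "e \<subseteq> to_nat ` Vs r m n \<and> card e = 2" if "e \<in> EE r m" for e
  proof -
  from that obtain a b where ab: "e = {to_nat a, to_nat b}" "ed r m a b" unfolding EE_def by blast
  have "a \<in> Vs r m n" "b \<in> Vs r m n" using ab(2) ed_Vs ed_sym by metis+
  moreover have "a \<noteq> b" using ed_irrefl[OF ab(2)] .
  ultimately show "e \<subseteq> to_nat ` Vs r m n \<and> card e = 2" using ab(1) by auto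
  qed
  then show ?thesis unfolding graph_def by (simp add: finite_Vs)
qed

lemma card_V: "n \<le> card (to_nat ` Vs r m n)"
proof -
  have "to_nat ` Pad ` {..<n} \<subseteq> to_nat ` Vs r m n" by (auto simp: Vs_def)
  then have "card (to_nat ` Pad ` {..<n}) \<le> card (to_nat ` Vs r m n)"
    by (rule card_mono[rotated]) (simp add: finite_Vs)
  moreover have "card (to_nat ` Pad ` {..<n}) = n"
    by (simp add: card_image inj_on_def)
  ultimately show ?thesis by simp
qed

lemma chrom: assumes "r \<ge> 2" shows "chromatic_number (to_nat ` Vs r m n) (EE r m) \<le> r"
proof -
  have "proper_coloring_on (EE r m) (to_nat ` Vs r m n) (\<lambda>x. colf r (from_nat x)) r"
    unfolding proper_iff
  proof (intro conjI ballI impI)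
    fix a assume "a \<in> Vs r m n"
    then show "colf r (from_nat (to_nat a)) \<in> {1..r}" using assms by (auto simp: Vs_def)
  next
    fix a b assume "ed r m a b"
    then show "colf r (from_nat (to_nat a)) \<noteq> colf r (from_nat (to_nat b))"
      using assms by (cases a; cases b; auto simp: ed_def)
  qed
  then have "\<exists>f. proper_coloring_on (EE r m) (to_nat ` Vs r m n) f r" by blast
  then show ?thesis unfolding chromatic_number_def by (rule Least_le)
qed

lemma dproper: "proper_coloring_on (EE r m) (to_nat ` PS m) (\<lambda>x. dcol m (from_nat x)) (m + 1)"
  unfolding proper_iff
proof (intro conjI ballI impI)
  fix a assume "a \<in> PS m"
  then show "dcol m (from_nat (to_nat a)) \<in> {1..m+1}" by (auto simp: PS_def)
next
  fix a b assume "a \<in> PS m" "b \<in> PS m" "ed r m a b"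
  then show "dcol m (from_nat (to_nat a)) \<noteq> dcol m (from_nat (to_nat b))" using noedge by blast
qed

lemma noext:
  assumes r2: "r \<ge> 2" and m1: "m \<ge> 1" and ar: "2 * M < 2 * r + m + 2" and mM: "m + 1 \<le> M"
    and f: "proper_coloring_on (EE r m) (to_nat ` Vs r m n) f M"
    and fd: "\<forall>v\<in>to_nat ` PS m. f v = dcol m (from_nat v)"
  shows False
proof -
  define G where "G i j = f (to_nat (X i j))" for i j
  have f1: "\<forall>a\<in>Vs r m n. f (to_nat a) \<in> {1..M}"
    and f2: "\<forall>a\<in>Vs r m n. \<forall>b\<in>Vs r m n. ed r m a b \<longrightarrow> f (to_nat a) \<noteq> f (to_nat b)"
    using f unfolding proper_iff by auto
  have fd': "\<And>a. a \<in> PS m \<Longrightarrow> f (to_nat a) = dcol m a" using fd by simp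
  have inV: "\<And>a. a \<in> PS m \<Longrightarrow> a \<in> Vs r m n" using PS_Vs by blast
  have XV: "\<And>i j. i < r \<Longrightarrow> j < m \<Longrightarrow> X i j \<in> Vs r m n" by (auto simp: Vs_def)
  show False
  proof (rule pigeon[of m r G M])
    show "1 \<le> m" by fact
  next
    fix i j assume ij: "i < r" "j < m"
    have "G i j \<in> {1..M}" using f1 XV[OF ij] by (simp add: G_def)
    moreover have "G i j \<noteq> j + 1 \<and> G i j \<noteq> m + 1"
    proof (cases "i + 1 < r")
      case True
      have P1: "Pv j \<in> PS m" "Hh \<in> PS m" using ij by (auto simp: PS_def)
      have "ed r m (X i j) (Pv j)" "ed r m (X i j) Hh" using True ij by (auto simp: ed_def)
      then show ?thesis using f2 XV[OF ij] inV[OF P1(1)] inV[OF P1(2)] fd'[OF P1(1)] fd'[OF P1(2)]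
        unfolding G_def by fastforce
    next
      case False
      then have ir: "i + 1 = r" using ij by simp
      have P1: "Qv j \<in> PS m" "Hh2 \<in> PS m" using ij by (auto simp: PS_def)
      have "ed r m (X i j) (Qv j)" "ed r m (X i j) Hh2" using ir ij by (auto simp: ed_def)
      then show ?thesis using f2 XV[OF ij] inV[OF P1(1)] inV[OF P1(2)] fd'[OF P1(1)] fd'[OF P1(2)]
        unfolding G_def by fastforce
    qed
    ultimately show "G i j \<in> {1..M} \<and> G i j \<noteq> j + 1 \<and> G i j \<noteq> m + 1" by blast
  next
    fix i i' j j' assume h: "i < r" "i' < r" "j < m" "j' < m" "i \<noteq> i'"
    then have "ed r m (X i j) (X i' j')" by (simp add: ed_def)
    then show "G i j \<noteq> G i' j'" using f2 XV h unfolding G_def by blast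
  qed (use ar mM in auto)
qed

theorem theorem6:
  fixes r k :: nat
  assumes "r \<ge> 2" and "k > 0" and "even (r + k)" and "k \<le> r"
  shows "\<forall>n. \<exists>V E P d.
           graph V E \<and> card V \<ge> n \<and>
           chromatic_number V E \<le> r \<and>
           P \<subseteq> V \<and> card (close_pairs E P 2) = 2 * (r + k - 1) \<and>
           proper_coloring_on E P d (r + k) \<and>
           \<not> (\<exists>f. proper_coloring_on E V f ((3 * r + k) div 2) \<and> (\<forall>v\<in>P. f v = d v))"
proof
  fix n
  obtain s where s: "r + k = 2 * s" using assms(3) by (rule evenE)
  define m where "m = r + k - 1"
  have M: "(3 * r + k) div 2 = r + s" using s by simp
  have m1: "m \<ge> 1" and mk: "m + 1 = r + k" using assms unfolding m_def by auto
  have ar: "2 * ((3 * r + k) div 2) < 2 * r + m + 2" using M s mk by simp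
  have mM: "m + 1 \<le> (3 * r + k) div 2" using M s mk assms(4) by simp
  show "\<exists>V E P d.
           graph V E \<and> card V \<ge> n \<and>
           chromatic_number V E \<le> r \<and>
           P \<subseteq> V \<and> card (close_pairs E P 2) = 2 * (r + k - 1) \<and>
           proper_coloring_on E P d (r + k) \<and>
           \<not> (\<exists>f. proper_coloring_on E V f ((3 * r + k) div 2) \<and> (\<forall>v\<in>P. f v = d v))"
  proof (intro exI conjI)
    show "graph (to_nat ` Vs r m n) (EE r m)" by (rule graph_ok)
    show "n \<le> card (to_nat ` Vs r m n)" by (rule card_V)
    show "chromatic_number (to_nat ` Vs r m n) (EE r m) \<le> r" by (rule chrom[OF assms(1)])
    show "to_nat ` PS m \<subseteq> to_nat ` Vs r m n" using PS_Vs by blast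
    show "card (close_pairs (EE r m) (to_nat ` PS m) 2) = 2 * (r + k - 1)"
      using card_close[OF assms(1)] m_def by simp
    show "proper_coloring_on (EE r m) (to_nat ` PS m) (\<lambda>x. dcol m (from_nat x)) (r + k)"
      using dproper[of r m] mk by simp
    show "\<not> (\<exists>f. proper_coloring_on (EE r m) (to_nat ` Vs r m n) f ((3 * r + k) div 2) \<and>
          (\<forall>v\<in>to_nat ` PS m. f v = dcol m (from_nat v)))"
      using noext[OF assms(1) m1 ar mM] by blast
  qed
qed

end
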